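(* Let $A$ be a wqo with $\mathbf{w}(A)=\alpha+n$ where $\alpha$ is an ordinal and $0\le n<\omega$. Then there exists a wqo $B$ with $\mathbf{w}(B)=\alpha$ such that $B\sqcup\Gamma_n$ is isomorphic to a substructure of $A$.
   Context: A wqo is a quasi-order in which every infinite sequence $x_0,x_1,\dots$ has $i<j$ with $x_i\le x_j$. $\mathbf{w}(A)$ (width) is the rank of the root of the well-founded tree of finite sequences of pairwise incomparable elements of $A$ (root: empty sequence, children: one-element extensions; rank $r(s)=\sup\{r(t)+1: t \text{ child of } s\}$). $\Gamma_n$ is an $n$-element antichain. $B\sqcup C$ is the disjoint union with ordering $\le_B\cup\le_C$. A substructure of $A$ is a subset of $A$ with the restricted ordering. *)

theory Defs
  imports Main
begin

definition qo_on :: "'a set \<Rightarrow> ('a \<Rightarrow> 'a \<Rightarrow> bool) \<Rightarrow> bool" where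
  "qo_on A le \<longleftrightarrow> (\<forall>x\<in>A. le x x) \<and>
     (\<forall>x\<in>A. \<forall>y\<in>A. \<forall>z\<in>A. le x y \<longrightarrow> le y z \<longrightarrow> le x z)"

definition wqo_on :: "'a set \<Rightarrow> ('a \<Rightarrow> 'a \<Rightarrow> bool) \<Rightarrow> bool" where
  "wqo_on A le \<longleftrightarrow> qo_on A le \<and>
     (\<forall>g :: nat \<Rightarrow> 'a. (\<forall>i. g i \<in> A) \<longrightarrow> (\<exists>i j. i < j \<and> le (g i) (g j)))"

text \<open>Ordinals are represented, as in Main (BNF_Wellorder_Relation), by well-order
  relations up to isomorphism; the ordinal of W is its order type.

  Rank of a node s in a tree given by a child relation ch (ch t s: t is a child of s):
  rank(s) \<le> otype W iff the strict descendants of s admit a labelling into Field W that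
  strictly decreases from each node to its children.\<close>

definition rank_le :: "('n \<Rightarrow> 'n \<Rightarrow> bool) \<Rightarrow> 'n \<Rightarrow> 'b rel \<Rightarrow> bool" where
  "rank_le ch s W \<longleftrightarrow> (\<exists>f. (\<forall>t. ch\<^sup>+\<^sup>+ t s \<longrightarrow> f t \<in> Field W) \<and>
      (\<forall>t u. ch\<^sup>+\<^sup>+ u s \<longrightarrow> ch t u \<longrightarrow> (f t, f u) \<in> W \<and> f t \<noteq> f u))"

text \<open>rank(s) = otype W: rank(s) \<le> otype W but not \<le> any smaller ordinal (proper initial segment).\<close>

definition rank_is :: "('n \<Rightarrow> 'n \<Rightarrow> bool) \<Rightarrow> 'n \<Rightarrow> 'b rel \<Rightarrow> bool" where
  "rank_is ch s W \<longleftrightarrow> Well_order W \<and> rank_le ch s W \<and>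
     (\<forall>a\<in>Field W. \<not> rank_le ch s (Restr W (underS W a)))"

definition antichain_seq :: "'a set \<Rightarrow> ('a \<Rightarrow> 'a \<Rightarrow> bool) \<Rightarrow> 'a list \<Rightarrow> bool" where
  "antichain_seq A le xs \<longleftrightarrow> set xs \<subseteq> A \<and>
     (\<forall>i<length xs. \<forall>j<length xs. i \<noteq> j \<longrightarrow> \<not> le (xs ! i) (xs ! j))"

definition antichain_child :: "'a set \<Rightarrow> ('a \<Rightarrow> 'a \<Rightarrow> bool) \<Rightarrow> 'a list \<Rightarrow> 'a list \<Rightarrow> bool" where
  "antichain_child A le t s \<longleftrightarrow> antichain_seq A le s \<and> antichain_seq A le t \<and>
     (\<exists>x. t = s @ [x])"

definition width_is :: "'a set \<Rightarrow> ('a \<Rightarrow> 'a \<Rightarrow> bool) \<Rightarrow> 'b rel \<Rightarrow> bool" where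
  "width_is A le W \<longleftrightarrow> rank_is (antichain_child A le) [] W"

definition ord_plus_nat :: "'b rel \<Rightarrow> nat \<Rightarrow> ('b + nat) rel" where
  "ord_plus_nat W n =
     {(Inl a, Inl b) | a b. (a, b) \<in> W} \<union>
     {(Inl a, Inr i) | a i. a \<in> Field W \<and> i < n} \<union>
     {(Inr i, Inr j) | i j. i \<le> j \<and> j < n}"

definition dunion_carrier :: "'a set \<Rightarrow> nat \<Rightarrow> ('a + nat) set" where
  "dunion_carrier B n = Inl ` B \<union> Inr ` {..<n}"

fun dunion_le :: "('a \<Rightarrow> 'a \<Rightarrow> bool) \<Rightarrow> ('a + nat) \<Rightarrow> ('a + nat) \<Rightarrow> bool" where
  "dunion_le le (Inl x) (Inl y) = le x y"
| "dunion_le le (Inr i) (Inr j) = (i = j)"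
| "dunion_le le _ _ = False"

end

theory Submission
  imports Defs
begin


lemma WO_props:
  assumes "Well_order V"
  shows "refl_on (Field V) V" "trans V" "antisym V"
  using assms unfolding well_order_on_def linear_order_on_def partial_order_on_def preorder_on_def
  by auto

lemma antichain_prefix:
  "antichain_seq A le (xs @ ys) \<Longrightarrow> antichain_seq A le xs"
  unfolding antichain_seq_def
proof (intro conjI allI impI)
  assume H: "set (xs @ ys) \<subseteq> A \<and> (\<forall>i<length (xs @ ys). \<forall>j<length (xs @ ys). i \<noteq> j \<longrightarrow> \<not> le ((xs @ ys) ! i) ((xs @ ys) ! j))"
  then show "set xs \<subseteq> A" by auto
  fix i j assume "i < length xs" "j < length xs" "i \<noteq> j"
  then show "\<not> le (xs ! i) (xs ! j)" using H[THEN conjunct2, rule_format, of i j] by (simp add: nth_append)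
qed

lemma child_iff:
  "antichain_child A le t s \<longleftrightarrow> antichain_seq A le t \<and> (\<exists>x. t = s @ [x])"
  unfolding antichain_child_def using antichain_prefix by blast

lemma desc_iff:
  "(antichain_child A le)\<^sup>+\<^sup>+ t s \<longleftrightarrow>
     antichain_seq A le s \<and> antichain_seq A le t \<and> (\<exists>r. r \<noteq> [] \<and> t = s @ r)"
proof
  assume "(antichain_child A le)\<^sup>+\<^sup>+ t s"
  then show "antichain_seq A le s \<and> antichain_seq A le t \<and> (\<exists>r. r \<noteq> [] \<and> t = s @ r)"
  proof (induction t rule: converse_tranclp_induct)
    case (base y)
    then obtain x where "antichain_seq A le s" "antichain_seq A le y" "y = s @ [x]"
      unfolding antichain_child_def by blast
    then show ?case by blast
  next
    case (step y z)
    then obtain x where "antichain_seq A le y" "y = z @ [x]"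
      unfolding antichain_child_def by blast
    moreover obtain r where "antichain_seq A le s" "z = s @ r" using step(3) by blast
    ultimately have "antichain_seq A le s \<and> antichain_seq A le y \<and> (r @ [x] \<noteq> [] \<and> y = s @ (r @ [x]))"
      by simp
    then show ?case by blast
  qed
next
  assume H: "antichain_seq A le s \<and> antichain_seq A le t \<and> (\<exists>r. r \<noteq> [] \<and> t = s @ r)"
  then obtain r where r: "r \<noteq> []" "t = s @ r" and as: "antichain_seq A le s" "antichain_seq A le t" by auto
  have "antichain_seq A le (s @ r) \<Longrightarrow> r \<noteq> [] \<Longrightarrow> (antichain_child A le)\<^sup>+\<^sup>+ (s @ r) s"
  proof (induction r rule: rev_induct)
    case Nil then show ?case by simp
  next
    case (snoc x r)
    show ?case
    proof (cases "r = []")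
      case True
      then show ?thesis using snoc as unfolding antichain_child_def by auto
    next
      case False
      have a1: "antichain_seq A le (s @ r)" using snoc(2) antichain_prefix[of A le "s @ r" "[x]"] by simp
      have "(antichain_child A le)\<^sup>+\<^sup>+ (s @ r) s" using snoc.IH a1 False by blast
      moreover have "antichain_child A le (s @ r @ [x]) (s @ r)"
        using snoc(2) a1 unfolding antichain_child_def by auto
      ultimately show ?thesis by (simp add: tranclp.trancl_into_trancl)
    qed
  qed
  then show "(antichain_child A le)\<^sup>+\<^sup>+ t s" using r as by simp
qed

lemma rank_le_map:
  assumes "rank_le ch s R" "inj_on h (Field R)" "\<And>x y. (x,y) \<in> R \<Longrightarrow> (h x, h y) \<in> R'"
  shows "rank_le ch s R'"
proof -
  obtain f where f1: "\<forall>t. ch\<^sup>+\<^sup>+ t s \<longrightarrow> f t \<in> Field R"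
    and f2: "\<forall>t u. ch\<^sup>+\<^sup>+ u s \<longrightarrow> ch t u \<longrightarrow> (f t, f u) \<in> R \<and> f t \<noteq> f u"
    using assms(1) unfolding rank_le_def by blast
  have FF: "x \<in> Field R \<Longrightarrow> h x \<in> Field R'" for x
    using assms(3) unfolding Field_def by blast
  show ?thesis unfolding rank_le_def
  proof (intro exI[of _ "h \<circ> f"] conjI allI impI)
    fix t assume "ch\<^sup>+\<^sup>+ t s" then show "(h \<circ> f) t \<in> Field R'" using f1 FF by auto
  next
    fix t u assume a: "ch\<^sup>+\<^sup>+ u s" "ch t u"
    then have "ch\<^sup>+\<^sup>+ t s" by (meson tranclp_into_tranclp2)
    then have "f t \<in> Field R" "f u \<in> Field R" using f1 a by auto
    then show "((h \<circ> f) t, (h \<circ> f) u) \<in> R'" "(h \<circ> f) t \<noteq> (h \<circ> f) u"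
      using f2 a assms(2,3) unfolding inj_on_def by auto
  qed
qed


lemma rank_is_Inl:
  assumes "rank_is ch s (ord_plus_nat W 0)" "Well_order W"
  shows "rank_is ch s W"
proof -
  let ?V = "ord_plus_nat W 0"
  have FV: "Field ?V \<subseteq> range Inl" unfolding Field_def ord_plus_nat_def by auto
  have "rank_le ch s W"
  proof (rule rank_le_map[of ch s ?V projl])
    show "rank_le ch s ?V" using assms(1) unfolding rank_is_def by auto
    show "inj_on projl (Field ?V)" unfolding inj_on_def
    proof (intro ballI impI)
      fix x y assume "x \<in> Field ?V" "y \<in> Field ?V" "projl x = projl y"
      moreover obtain a b where "x = Inl a" "y = Inl b" using FV \<open>x \<in> Field ?V\<close> \<open>y \<in> Field ?V\<close> by blast
      ultimately show "x = y" by simp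
    qed
    show "(x, y) \<in> ?V \<Longrightarrow> (projl x, projl y) \<in> W" for x y
      unfolding ord_plus_nat_def by auto
  qed
  moreover have "\<not> rank_le ch s (Restr W (underS W a))" if a: "a \<in> Field W" for a
  proof
    assume "rank_le ch s (Restr W (underS W a))"
    then have "rank_le ch s (Restr ?V (underS ?V (Inl a)))"
    proof (rule rank_le_map[where h = Inl])
      show "inj_on Inl (Field (Restr W (underS W a)))" by (auto simp: inj_on_def)
      show "(Inl x, Inl y) \<in> Restr ?V (underS ?V (Inl a))" if "(x, y) \<in> Restr W (underS W a)" for x y
        using that unfolding ord_plus_nat_def underS_def by auto
    qed
    moreover have "(a,a) \<in> W" using WO_props(1)[OF assms(2)] a by (simp add: refl_on_def)
    then have "(Inl a, Inl a) \<in> ?V" by (simp add: ord_plus_nat_def)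
    then have "Inl a \<in> Field ?V" by (rule FieldI1)
    ultimately show False using assms(1) unfolding rank_is_def by auto
  qed
  ultimately show ?thesis using assms(2) unfolding rank_is_def by blast
qed

definition incs :: "'a list \<Rightarrow> 'a set \<Rightarrow> ('a \<Rightarrow> 'a \<Rightarrow> bool) \<Rightarrow> 'a set" where
  "incs s A le = {y\<in>A. \<forall>x\<in>set s. \<not> le x y \<and> \<not> le y x}"

lemma antichain_char:
  assumes "\<forall>x\<in>A. le x x"
  shows "antichain_seq A le xs \<longleftrightarrow> set xs \<subseteq> A \<and> distinct xs \<and>
           (\<forall>x\<in>set xs. \<forall>y\<in>set xs. x \<noteq> y \<longrightarrow> \<not> le x y)"
proof
  assume H: "antichain_seq A le xs"
  have sA: "set xs \<subseteq> A" using H unfolding antichain_seq_def by blast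
  have nc: "\<not> le (xs ! i) (xs ! j)" if "i < length xs" "j < length xs" "i \<noteq> j" for i j
    using H that unfolding antichain_seq_def by blast
  have "distinct xs"
    unfolding distinct_conv_nth
  proof (intro allI impI)
    fix i j assume ij: "i < length xs" "j < length xs" "i \<noteq> j"
    have "xs ! i \<in> A" using sA ij(1) by (meson nth_mem subsetD)
    then have "le (xs ! i) (xs ! i)" using assms by blast
    then show "xs ! i \<noteq> xs ! j" using nc[OF ij] by metis
  qed
  moreover have "\<not> le x y" if xy: "x \<in> set xs" "y \<in> set xs" "x \<noteq> y" for x y
  proof -
    obtain i where i: "i < length xs" "x = xs ! i" using xy(1) by (auto simp: in_set_conv_nth)
    obtain j where j: "j < length xs" "y = xs ! j" using xy(2) by (auto simp: in_set_conv_nth)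
    have "i \<noteq> j" using i j xy(3) by blast
    then show ?thesis using nc i j by blast
  qed
  ultimately show "set xs \<subseteq> A \<and> distinct xs \<and> (\<forall>x\<in>set xs. \<forall>y\<in>set xs. x \<noteq> y \<longrightarrow> \<not> le x y)"
    using sA by blast
next
  assume H: "set xs \<subseteq> A \<and> distinct xs \<and> (\<forall>x\<in>set xs. \<forall>y\<in>set xs. x \<noteq> y \<longrightarrow> \<not> le x y)"
  have "\<not> le (xs ! i) (xs ! j)" if "i < length xs" "j < length xs" "i \<noteq> j" for i j
  proof -
    have "xs ! i \<noteq> xs ! j" using H that by (simp add: nth_eq_iff_index_eq)
    then show ?thesis using H that by (meson nth_mem)
  qed
  then show "antichain_seq A le xs" using H unfolding antichain_seq_def by blast
qed

lemma antichain_append_incs: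
  assumes R: "\<forall>x\<in>A. le x x" and s: "antichain_seq A le s"
  shows "antichain_seq A le (s @ r) \<longleftrightarrow> antichain_seq (incs s A le) le r"
proof -
  have R2: "\<forall>x\<in>incs s A le. le x x" using R unfolding incs_def by auto
  have S: "set s \<subseteq> A" "distinct s" "\<forall>x\<in>set s. \<forall>y\<in>set s. x \<noteq> y \<longrightarrow> \<not> le x y"
    using s unfolding antichain_char[of A le, OF R] by auto
  show ?thesis
  proof
    assume H: "antichain_seq A le (s @ r)"
    then have H2: "set r \<subseteq> A" "distinct r" "set s \<inter> set r = {}"
      "\<forall>x\<in>set s \<union> set r. \<forall>y\<in>set s \<union> set r. x \<noteq> y \<longrightarrow> \<not> le x y"
      unfolding antichain_char[of A le, OF R] set_append distinct_append by blast+
    have "set r \<subseteq> incs s A le"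
    proof
      fix y assume y: "y \<in> set r"
      have "y \<in> A" using H2(1) y by blast
      moreover have "\<not> le x y \<and> \<not> le y x" if x: "x \<in> set s" for x
      proof -
        have "x \<noteq> y" using H2(3) x y by blast
        moreover have xs: "x \<in> set s \<union> set r" "y \<in> set s \<union> set r" using x y by auto
        ultimately show ?thesis using H2(4)[rule_format, OF xs(1) xs(2)] H2(4)[rule_format, OF xs(2) xs(1)] by metis
      qed
      ultimately show "y \<in> incs s A le" unfolding incs_def by blast
    qed
    then show "antichain_seq (incs s A le) le r"
      unfolding antichain_char[of "incs s A le" le, OF R2] using H2 by blast
  next
    assume H: "antichain_seq (incs s A le) le r"
    then have H2: "set r \<subseteq> incs s A le" "distinct r" "\<forall>x\<in>set r. \<forall>y\<in>set r. x \<noteq> y \<longrightarrow> \<not> le x y"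
      unfolding antichain_char[of "incs s A le" le, OF R2] by blast+
    have rA: "set r \<subseteq> A" using H2(1) unfolding incs_def by blast
    have disj: "set s \<inter> set r = {}"
    proof (rule ccontr)
      assume "set s \<inter> set r \<noteq> {}"
      then obtain y where "y \<in> set s" "y \<in> set r" by blast
      then show False using H2(1) R rA unfolding incs_def by blast
    qed
    have cross: "\<not> le x y \<and> \<not> le y x" if "x \<in> set s" "y \<in> set r" for x y
      using H2(1) that unfolding incs_def by blast
    have "\<forall>x\<in>set (s @ r). \<forall>y\<in>set (s @ r). x \<noteq> y \<longrightarrow> \<not> le x y"
      unfolding set_append using S(3) H2(3) cross by blast
    moreover have "distinct (s @ r)" using S(2) H2(2) disj by simp
    moreover have "set (s @ r) \<subseteq> A" using S(1) rA by simp
    ultimately show "antichain_seq A le (s @ r)"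
      unfolding antichain_char[of A le, OF R] by blast
  qed
qed

lemma desc_root:
  "(antichain_child B le)\<^sup>+\<^sup>+ r [] \<longleftrightarrow> antichain_seq B le r \<and> r \<noteq> []"
  unfolding desc_iff by (auto simp: antichain_seq_def)

lemma rank_le_transfer:
  assumes R: "\<forall>x\<in>A. le x x" and s: "antichain_seq A le s"
  shows "rank_le (antichain_child A le) s V \<longleftrightarrow> rank_le (antichain_child (incs s A le) le) [] V"
proof
  let ?B = "incs s A le"
  assume "rank_le (antichain_child A le) s V"
  then obtain f where f1: "\<forall>t. (antichain_child A le)\<^sup>+\<^sup>+ t s \<longrightarrow> f t \<in> Field V"
    and f2: "\<forall>t u. (antichain_child A le)\<^sup>+\<^sup>+ u s \<longrightarrow> antichain_child A le t u \<longrightarrow> (f t, f u) \<in> V \<and> f t \<noteq> f u"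
    unfolding rank_le_def by blast
  show "rank_le (antichain_child ?B le) [] V" unfolding rank_le_def
  proof (intro exI[of _ "\<lambda>r. f (s @ r)"] conjI allI impI)
    fix t assume "(antichain_child ?B le)\<^sup>+\<^sup>+ t []"
    then have "(antichain_child A le)\<^sup>+\<^sup>+ (s @ t) s"
      unfolding desc_root desc_iff using antichain_append_incs[OF R s] s by auto
    then show "f (s @ t) \<in> Field V" using f1 by auto
  next
    fix t u assume a: "(antichain_child ?B le)\<^sup>+\<^sup>+ u []" "antichain_child ?B le t u"
    then have "(antichain_child A le)\<^sup>+\<^sup>+ (s @ u) s" "antichain_child A le (s @ t) (s @ u)"
      unfolding desc_root desc_iff child_iff using antichain_append_incs[OF R s] s by auto
    then show "(f (s @ t), f (s @ u)) \<in> V" "f (s @ t) \<noteq> f (s @ u)" using f2 by auto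
  qed
next
  let ?B = "incs s A le"
  assume "rank_le (antichain_child ?B le) [] V"
  then obtain f where f1: "\<forall>t. (antichain_child ?B le)\<^sup>+\<^sup>+ t [] \<longrightarrow> f t \<in> Field V"
    and f2: "\<forall>t u. (antichain_child ?B le)\<^sup>+\<^sup>+ u [] \<longrightarrow> antichain_child ?B le t u \<longrightarrow> (f t, f u) \<in> V \<and> f t \<noteq> f u"
    unfolding rank_le_def by blast
  show "rank_le (antichain_child A le) s V" unfolding rank_le_def
  proof (intro exI[of _ "\<lambda>r. f (drop (length s) r)"] conjI allI impI)
    fix t assume "(antichain_child A le)\<^sup>+\<^sup>+ t s"
    then have "antichain_seq A le t" "\<exists>r. r \<noteq> [] \<and> t = s @ r" unfolding desc_iff by auto
    then obtain r where "r \<noteq> []" "t = s @ r" "antichain_seq A le (s @ r)" by blast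
    then have "t = s @ r" "(antichain_child ?B le)\<^sup>+\<^sup>+ r []"
      unfolding desc_root using antichain_append_incs[OF R s] by auto
    then show "f (drop (length s) t) \<in> Field V" using f1 by auto
  next
    fix t u assume a: "(antichain_child A le)\<^sup>+\<^sup>+ u s" "antichain_child A le t u"
    have "antichain_seq A le u" "\<exists>r. r \<noteq> [] \<and> u = s @ r" using a(1) unfolding desc_iff by auto
    moreover have "antichain_seq A le t" "\<exists>x. t = u @ [x]" using a(2) unfolding child_iff by auto
    ultimately obtain r x where rx: "r \<noteq> []" "u = s @ r" "t = s @ (r @ [x])"
      "antichain_seq A le (s @ r)" "antichain_seq A le (s @ (r @ [x]))" by auto
    then have "(antichain_child ?B le)\<^sup>+\<^sup>+ r []" "antichain_child ?B le (r @ [x]) r"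
      unfolding desc_root child_iff using antichain_append_incs[OF R s] by auto
    note rx = rx this
    then show "(f (drop (length s) t), f (drop (length s) u)) \<in> V"
      "f (drop (length s) t) \<noteq> f (drop (length s) u)" using f2 by auto
  qed
qed

lemma rank_is_transfer:
  assumes R: "\<forall>x\<in>A. le x x" and s: "antichain_seq A le s"
  shows "rank_is (antichain_child A le) s V \<longleftrightarrow> rank_is (antichain_child (incs s A le) le) [] V"
  unfolding rank_is_def rank_le_transfer[OF R s] ..



lemma anc:
  assumes "(antichain_child A le)\<^sup>+\<^sup>+ t s"
  shows "antichain_child A le (take (Suc (length s)) t) s \<and>
    (t = take (Suc (length s)) t \<or> (antichain_child A le)\<^sup>+\<^sup>+ t (take (Suc (length s)) t))"
proof -
  obtain r where r: "r \<noteq> []" "t = s @ r" and as: "antichain_seq A le s" "antichain_seq A le t"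
    using assms unfolding desc_iff by auto
  obtain x r' where xr: "r = x # r'" using r(1) by (cases r) auto
  have c: "take (Suc (length s)) t = s @ [x]" using r xr by simp
  have ac: "antichain_seq A le (s @ [x])" using as(2) r xr antichain_prefix[of A le "s @ [x]" r'] by simp
  have 1: "antichain_child A le (take (Suc (length s)) t) s" using c ac as(1)
    unfolding antichain_child_def by auto
  have "t = s @ [x] \<or> (antichain_child A le)\<^sup>+\<^sup>+ t (s @ [x])"
  proof (cases "r' = []")
    case True then show ?thesis using r xr by simp
  next
    case False then show ?thesis unfolding desc_iff using ac as r xr by auto
  qed
  then show ?thesis using 1 c by simp
qed

lemma step:
  assumes ri: "rank_is (antichain_child A le) s (ord_plus_nat W (Suc m))"
  shows "\<exists>x. antichain_child A le (s @ [x]) s \<and> rank_is (antichain_child A le) (s @ [x]) (ord_plus_nat W m)"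
proof (rule ccontr)
  assume nex: "\<not> ?thesis"
  define V where "V = ord_plus_nat W (Suc m)"
  define V' where "V' = ord_plus_nat W m"
  let ?ch = "antichain_child A le"
  have WO: "Well_order V" using ri by (simp add: rank_is_def V_def)
  note VP = WO_props[OF WO]
  have top: "(x, Inr m) \<in> V" if "x \<in> Field V" for x
    using that unfolding V_def Field_def ord_plus_nat_def by auto
  have topF: "Inr m \<in> Field V"
  proof -
    have "(Inr m, Inr m) \<in> V" unfolding V_def ord_plus_nat_def by auto
    then show ?thesis by (rule FieldI1)
  qed
  have V'eq: "V' = Restr V (underS V (Inr m))"
    unfolding V'_def V_def underS_def ord_plus_nat_def Field_def by auto
  have WO': "Well_order V'" using WO V'eq Well_order_Restr by metis
  have notV': "\<not> rank_le ?ch s V'" using ri topF V'eq unfolding rank_is_def V_def by auto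
  obtain f where f1: "\<forall>t. ?ch\<^sup>+\<^sup>+ t s \<longrightarrow> f t \<in> Field V"
    and f2: "\<forall>t u. ?ch\<^sup>+\<^sup>+ u s \<longrightarrow> ?ch t u \<longrightarrow> (f t, f u) \<in> V \<and> f t \<noteq> f u"
    using ri unfolding rank_is_def rank_le_def V_def by blast
  have below: "(f t, f c) \<in> V \<and> f t \<noteq> f c" if tc: "?ch\<^sup>+\<^sup>+ t c" and cs: "?ch c s" for t c
    using tc
  proof (induction t rule: converse_tranclp_induct)
    case (base y)
    then show ?case using f2 cs by blast
  next
    case (step y z)
    have zs: "?ch\<^sup>+\<^sup>+ z s" by (rule tranclp_trans[OF step(2) tranclp.r_into_trancl[of "antichain_child A le", OF cs]])
    have "(f y, f z) \<in> V" "f y \<noteq> f z" using f2 zs step(1) by auto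
    then have yz: "(f y, f z) \<in> V" "f y \<noteq> f z" by auto
    have zc: "(f z, f c) \<in> V" "f z \<noteq> f c" using step(3) by auto
    have "(f y, f c) \<in> V" by (rule transD[OF VP(2) yz(1) zc(1)])
    moreover have "f y \<noteq> f c"
    proof
      assume "f y = f c"
      then have "(f c, f z) \<in> V" using yz(1) by simp
      then have "f z = f c" using antisymD[OF VP(3) zc(1)] by simp
      then show False using zc(2) by simp
    qed
    ultimately show ?case by blast
  qed
  have belowtop: "f t \<in> underS V (Inr m)" if "?ch\<^sup>+\<^sup>+ t c" "?ch c s" for t c
  proof -
    have "f c \<in> Field V" using f1 that(2) by blast
    then have "(f c, Inr m) \<in> V" by (rule top)
    moreover have "(f t, f c) \<in> V" "f t \<noteq> f c" using below[OF that] by auto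
    ultimately have tc: "(f t, f c) \<in> V" "f t \<noteq> f c" "(f c, Inr m) \<in> V" by auto
    have "(f t, Inr m) \<in> V" by (rule transD[OF VP(2) tc(1) tc(3)])
    moreover have "f t \<noteq> Inr m"
    proof
      assume "f t = Inr m"
      then have "(Inr m, f c) \<in> V" using tc(1) by simp
      then have "f c = Inr m" using antisymD[OF VP(3) tc(3)] by simp
      then show False using tc(2) \<open>f t = Inr m\<close> by simp
    qed
    ultimately show ?thesis unfolding underS_def by blast
  qed
  have ttrans: "?ch\<^sup>+\<^sup>+ t s" if "?ch\<^sup>+\<^sup>+ t c" "?ch c s" for t c
    by (rule tranclp_trans[OF that(1) tranclp.r_into_trancl[of "antichain_child A le", OF that(2)]])
  have rlc: "rank_le ?ch c V'" if cs: "?ch c s" for c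
    unfolding rank_le_def
  proof (intro exI[of _ f] conjI allI impI)
    fix t assume tc: "?ch\<^sup>+\<^sup>+ t c"
    have "f t \<in> Field V" using f1 ttrans[OF tc cs] by blast
    then have "(f t, f t) \<in> V" using VP(1) by (simp add: refl_on_def)
    then have "(f t, f t) \<in> V'" using belowtop[OF tc cs] V'eq by auto
    then show "f t \<in> Field V'" by (rule FieldI1)
  next
    fix t u assume uc: "?ch\<^sup>+\<^sup>+ u c" and tu: "?ch t u"
    have tc: "?ch\<^sup>+\<^sup>+ t c" using uc tu by (meson tranclp_into_tranclp2)
    have "(f t, f u) \<in> V" "f t \<noteq> f u" using f2 ttrans[OF uc cs] tu by auto
    then show "(f t, f u) \<in> V'" "f t \<noteq> f u"
      using belowtop[OF tc cs] belowtop[OF uc cs] V'eq by auto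
  qed
  have ex_a: "\<exists>a. a \<in> Field V' \<and> rank_le ?ch c (Restr V' (underS V' a))" if cs: "?ch c s" for c
  proof -
    obtain x where "c = s @ [x]" using cs unfolding child_iff by auto
    then have "\<not> rank_is ?ch c V'" using nex cs unfolding V'_def by auto
    then show ?thesis using WO' rlc[OF cs] unfolding rank_is_def by auto
  qed
  define P where "P c a h \<longleftrightarrow> a \<in> Field V' \<and> (\<forall>t. ?ch\<^sup>+\<^sup>+ t c \<longrightarrow> h t \<in> Field (Restr V' (underS V' a))) \<and>
      (\<forall>t u. ?ch\<^sup>+\<^sup>+ u c \<longrightarrow> ?ch t u \<longrightarrow> (h t, h u) \<in> Restr V' (underS V' a) \<and> h t \<noteq> h u)" for c a h
  have "\<forall>c. \<exists>ah. ?ch c s \<longrightarrow> P c (fst ah) (snd ah)"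
  proof
    fix c show "\<exists>ah. ?ch c s \<longrightarrow> P c (fst ah) (snd ah)"
    proof (cases "?ch c s")
      case True
      then obtain a h where "P c a h" using ex_a[OF True] unfolding P_def rank_le_def by blast
      then show ?thesis by (intro exI[of _ "(a, h)"]) auto
    qed auto
  qed
  then obtain AH where AH: "\<And>c. ?ch c s \<Longrightarrow> P c (fst (AH c)) (snd (AH c))" using choice by metis
  define a where "a c = fst (AH c)" for c
  define h where "h c = snd (AH c)" for c
  define L where "L = Suc (length s)"
  define g where "g t = (if t = take L t then a (take L t) else h (take L t) t)" for t
  have Pc: "P c (a c) (h c)" if "?ch c s" for c using AH[OF that] unfolding a_def h_def .
  have "rank_le ?ch s V'" unfolding rank_le_def
  proof (intro exI[of _ g] conjI allI impI)
    fix t assume ts: "?ch\<^sup>+\<^sup>+ t s"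
    note A = anc[OF ts, folded L_def]
    have "P (take L t) (a (take L t)) (h (take L t))" using A Pc by blast
    then show "g t \<in> Field V'" unfolding g_def P_def using A
      by (auto simp: Field_def)
  next
    fix t u assume us: "?ch\<^sup>+\<^sup>+ u s" and tu: "?ch t u"
    have ts: "?ch\<^sup>+\<^sup>+ t s" using us tu by (meson tranclp_into_tranclp2)
    obtain x where tx: "t = u @ [x]" using tu unfolding child_iff by auto
    have lu: "length u \<ge> L" using us unfolding desc_iff L_def by (auto simp: Suc_le_eq)
    have same: "take L t = take L u" using tx lu by simp
    have tne: "t \<noteq> take L t"
    proof
      assume "t = take L t"
      then have "length t \<le> L" by (metis take_all_iff)
      then show False using tx lu by simp
    qed
    define c where "c = take L u"
    note A = anc[OF us, folded L_def c_def]
    have PC: "P c (a c) (h c)" using A Pc by blast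
    have tc: "?ch\<^sup>+\<^sup>+ t c" using anc[OF ts, folded L_def] tne same c_def by auto
    show "(g t, g u) \<in> V'" "g t \<noteq> g u"
    proof -
      have "(g t, g u) \<in> V' \<and> g t \<noteq> g u"
      proof (cases "u = c")
        case True
        have cu: "take L u = c" by (simp add: c_def)
        have uc': "u = take L u" using True cu by simp
        have gu: "g u = a c" unfolding g_def cu using True by simp
        have tc': "t \<noteq> c" using tne same cu by simp
        have gt: "g t = h c t" unfolding g_def same cu using tc' by simp
        have "h c t \<in> Field (Restr V' (underS V' (a c)))" using PC tc unfolding P_def by blast
        then have "h c t \<in> underS V' (a c)" by (rule subsetD[OF Field_Restr_subset])
        then have "(h c t, a c) \<in> V'" "h c t \<noteq> a c" unfolding underS_def by simp_all
        then show ?thesis using gu gt by simp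
      next
        case False
        have cu: "take L u = c" by (simp add: c_def)
        have uc': "u \<noteq> take L u" using False cu by simp
        have gu: "g u = h c u" unfolding g_def cu using False by simp
        have tc': "t \<noteq> c" using tne same cu by simp
        have gt: "g t = h c t" unfolding g_def same cu using tc' by simp
        have uc: "?ch\<^sup>+\<^sup>+ u c" using A False c_def by blast
        then have "(h c t, h c u) \<in> Restr V' (underS V' (a c)) \<and> h c t \<noteq> h c u"
          using PC tu unfolding P_def by blast
        then show ?thesis using gu gt by simp
      qed
      then show "(g t, g u) \<in> V'" "g t \<noteq> g u" by auto
    qed
  qed
  then show False using notV' by blast
qed



lemma iter:
  "rank_is (antichain_child A le) s (ord_plus_nat W k) \<Longrightarrow> antichain_seq A le s \<Longrightarrow>
   \<exists>r. length r = k \<and> antichain_seq A le (s @ r) \<and> rank_is (antichain_child A le) (s @ r) (ord_plus_nat W 0)"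
proof (induction k arbitrary: s)
  case 0
  then show ?case by (intro exI[of _ "[]"]) simp
next
  case (Suc k)
  obtain x where x: "antichain_child A le (s @ [x]) s" "rank_is (antichain_child A le) (s @ [x]) (ord_plus_nat W k)"
    using step[OF Suc.prems(1)] by blast
  have "antichain_seq A le (s @ [x])" using x(1) unfolding antichain_child_def by blast
  then obtain r where "length r = k" "antichain_seq A le (s @ [x] @ r)"
    "rank_is (antichain_child A le) (s @ [x] @ r) (ord_plus_nat W 0)"
    using Suc.IH[OF x(2)] by auto
  then show ?case by (intro exI[of _ "x # r"]) simp
qed

theorem mainTheorem6:
  fixes A :: "'a set" and le :: "'a \<Rightarrow> 'a \<Rightarrow> bool"
    and W :: "'b rel" and n :: nat
  assumes "wqo_on A le"
    and "Well_order W"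
    and "width_is A le (ord_plus_nat W n)"
  shows "\<exists>(B :: 'a set) leB (f :: 'a + nat \<Rightarrow> 'a).
           wqo_on B leB \<and> width_is B leB W \<and>
           inj_on f (dunion_carrier B n) \<and> f ` dunion_carrier B n \<subseteq> A \<and>
           (\<forall>x\<in>dunion_carrier B n. \<forall>y\<in>dunion_carrier B n.
              dunion_le leB x y \<longleftrightarrow> le (f x) (f y))"
proof -
  have R: "\<forall>x\<in>A. le x x" using assms(1) unfolding wqo_on_def qo_on_def by blast
  have e: "antichain_seq A le []" by (simp add: antichain_seq_def)
  obtain s where s: "length s = n" "antichain_seq A le s"
    "rank_is (antichain_child A le) s (ord_plus_nat W 0)"
    using iter[of A le "[]" W n] assms(3) e unfolding width_is_def by auto
  define B where "B = incs s A le"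
  have rW: "rank_is (antichain_child A le) s W" using rank_is_Inl[OF s(3) assms(2)] .
  have wB: "width_is B le W" unfolding width_is_def B_def
    using rank_is_transfer[OF R s(2)] rW by blast
  have BA: "B \<subseteq> A" unfolding B_def incs_def by blast
  have wqoB: "wqo_on B le"
  proof -
    have "qo_on B le" using assms(1) BA unfolding wqo_on_def qo_on_def by blast
    moreover have "\<exists>i j. i < j \<and> le (g i) (g j)" if "\<forall>i. g i \<in> B" for g :: "nat \<Rightarrow> 'a"
      using assms(1) that BA unfolding wqo_on_def by blast
    ultimately show ?thesis unfolding wqo_on_def by blast
  qed
  have S: "set s \<subseteq> A" "distinct s" "\<forall>x\<in>set s. \<forall>y\<in>set s. x \<noteq> y \<longrightarrow> \<not> le x y"
    using s(2) unfolding antichain_char[of A le, OF R] by auto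
  define f where "f = case_sum id (\<lambda>i. s ! i)"
  have fI: "f (Inl b) = b" for b unfolding f_def by simp
  have fR: "f (Inr i) = s ! i" for i unfolding f_def by simp
  have Binc: "\<not> le (s ! i) b \<and> \<not> le b (s ! i)" if "b \<in> B" "i < n" for b i
    using that s(1) unfolding B_def incs_def by auto
  have sle: "le (s ! i) (s ! j) \<longleftrightarrow> i = j" if "i < n" "j < n" for i j
  proof
    assume "le (s ! i) (s ! j)"
    moreover have "s ! i \<in> set s" "s ! j \<in> set s" using that s(1) by auto
    ultimately have "s ! i = s ! j" using S(3) by blast
    then show "i = j" using S(2) that s(1) by (simp add: nth_eq_iff_index_eq)
  next
    assume "i = j"
    have "s ! i \<in> A" using S(1) that s(1) by (meson nth_mem subsetD)
    then show "le (s ! i) (s ! j)" using R \<open>i = j\<close> by blast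
  qed
  have BR: "b \<in> B \<Longrightarrow> le b b" for b using R BA by blast
  have inj: "inj_on f (dunion_carrier B n)"
    unfolding inj_on_def dunion_carrier_def
  proof (intro ballI impI)
    fix x y assume x: "x \<in> Inl ` B \<union> Inr ` {..<n}" and y: "y \<in> Inl ` B \<union> Inr ` {..<n}"
      and eq: "f x = f y"
    show "x = y"
    proof (cases x)
      case (Inl b)
      then have b: "b \<in> B" using x by auto
      show ?thesis
      proof (cases y)
        case (Inl b') then show ?thesis using eq \<open>x = Inl b\<close> fI by simp
      next
        case (Inr j) then have "j < n" using y by auto
        then show ?thesis using eq \<open>x = Inl b\<close> \<open>y = Inr j\<close> fI fR Binc[OF b] BR[OF b] by metis
      qed
    next
      case (Inr i)
      then have i: "i < n" using x by auto
      show ?thesis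
      proof (cases y)
        case (Inl b') then have "b' \<in> B" using y by auto
        then show ?thesis using eq \<open>x = Inr i\<close> \<open>y = Inl b'\<close> fI fR Binc i BR by metis
      next
        case (Inr j) then have "j < n" using y by auto
        then show ?thesis using eq \<open>x = Inr i\<close> \<open>y = Inr j\<close> fR sle i by metis
      qed
    qed
  qed
  have img: "f ` dunion_carrier B n \<subseteq> A"
    unfolding dunion_carrier_def using BA S(1) s(1) fI fR by auto
  have ord: "\<forall>x\<in>dunion_carrier B n. \<forall>y\<in>dunion_carrier B n. dunion_le le x y \<longleftrightarrow> le (f x) (f y)"
  proof (intro ballI)
    fix x y assume x: "x \<in> dunion_carrier B n" and y: "y \<in> dunion_carrier B n"
    show "dunion_le le x y \<longleftrightarrow> le (f x) (f y)"
    proof (cases x)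
      case (Inl b)
      then have b: "b \<in> B" using x unfolding dunion_carrier_def by auto
      show ?thesis
      proof (cases y)
        case (Inl b') then show ?thesis using \<open>x = Inl b\<close> fI by simp
      next
        case (Inr j) then have "j < n" using y unfolding dunion_carrier_def by auto
        then show ?thesis using \<open>x = Inl b\<close> \<open>y = Inr j\<close> fI fR Binc[OF b] by simp
      qed
    next
      case (Inr i)
      then have i: "i < n" using x unfolding dunion_carrier_def by auto
      show ?thesis
      proof (cases y)
        case (Inl b') then have "b' \<in> B" using y unfolding dunion_carrier_def by auto
        then show ?thesis using \<open>x = Inr i\<close> \<open>y = Inl b'\<close> fI fR Binc i by simp
      next
        case (Inr j) then have "j < n" using y unfolding dunion_carrier_def by auto
        then show ?thesis using \<open>x = Inr i\<close> \<open>y = Inr j\<close> fR sle i by simp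
      qed
    qed
  qed
  show ?thesis using wqoB wB inj img ord by blast
qed

end
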